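(* Let $\mu,\mu'$ be Borel probability measures on a separable metric space $X$, $\nu,\nu'$ Borel probability measures on a separable metric space $Y$, and $F\in\mathcal F^2$. Then for every $\lambda>0$, $$\pi^{(\lambda)}(\mu\otimes\nu,\mu'\otimes\nu')\le\max\Big\{\pi^{(\lambda)}(\mu,\mu')+\pi^{(\lambda)}(\nu,\nu'),\ 2F\big(\pi^{(\lambda)}(\mu,\mu'),\pi^{(\lambda)}(\nu,\nu')\big)\Big\},$$ where the left-hand side is computed on $X\times Y$ with the metric $d_F$.
   Context: $\mathcal F^2$: continuous $F\colon[0,+\infty)^2\to[0,+\infty)$ such that for all metric spaces $d_F((x,y),(x',y')):=F(d_X(x,x'),d_Y(y,y'))$ is a metric on $X\times Y$. For $A$ in a metric space and $r>0$, $U_r(A)=\{x:d(x,A)<r\}$. The $\lambda$-Prokhorov distance $\pi^{(\lambda)}(\mu,\nu)$ between Borel probability measures is the infimum of $\varepsilon>0$ such that $\mu(U_\varepsilon(A))\ge\nu(A)-\lambda\varepsilon$ for every Borel set $A$. *)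

theory Defs
  imports "HOL-Probability.Probability"
begin

definition borel_of :: "'a topology \<Rightarrow> 'a measure" where
  "borel_of T = sigma (topspace T) {U. openin T U}"

definition prod_metric_F ::
  "(real \<Rightarrow> real \<Rightarrow> real) \<Rightarrow> ('a \<Rightarrow> 'a \<Rightarrow> real) \<Rightarrow> ('b \<Rightarrow> 'b \<Rightarrow> real)
     \<Rightarrow> ('a \<times> 'b) \<Rightarrow> ('a \<times> 'b) \<Rightarrow> real" where
  "prod_metric_F F dX dY = (\<lambda>(x, y) (x', y'). F (dX x x') (dY y y'))"

text \<open>The class F^2: continuous F : [0,oo)^2 -> [0,oo) such that d_F is a metric on
  X x Y for all metric spaces X, Y.  Metric spaces are quantified over carriers in the
  type real.\<close>
definition F2 :: "(real \<Rightarrow> real \<Rightarrow> real) \<Rightarrow> bool" where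
  "F2 F \<longleftrightarrow>
     continuous_on ({0..} \<times> {0..}) (\<lambda>(a, b). F a b) \<and>
     (\<forall>a b. 0 \<le> a \<longrightarrow> 0 \<le> b \<longrightarrow> 0 \<le> F a b) \<and>
     (\<forall>(X :: real set) dX (Y :: real set) dY.
        Metric_space X dX \<and> Metric_space Y dY \<longrightarrow>
        Metric_space (X \<times> Y) (prod_metric_F F dX dY))"

definition nbhd :: "'a set \<Rightarrow> ('a \<Rightarrow> 'a \<Rightarrow> real) \<Rightarrow> 'a set \<Rightarrow> real \<Rightarrow> 'a set" where
  "nbhd S d A r = {x \<in> S. (INF a\<in>A. ereal (d x a)) < ereal r}"

definition prokhorov ::
  "real \<Rightarrow> 'a set \<Rightarrow> ('a \<Rightarrow> 'a \<Rightarrow> real) \<Rightarrow> 'a measure \<Rightarrow> 'a measure \<Rightarrow> real" where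
  "prokhorov l S d \<mu> \<nu> =
     Inf {\<epsilon>. \<epsilon> > 0 \<and>
        (\<forall>A \<in> sets (borel_of (Metric_space.mtopology S d)).
           measure \<mu> (nbhd S d A \<epsilon>) \<ge> measure \<nu> A - l * \<epsilon>)}"

end

theory Submission
  imports Defs
begin


definition XX :: "real \<Rightarrow> real set" where
  "XX a = (if a = 0 then {0,1} else {0,1,2})"
definition dd :: "real \<Rightarrow> real \<Rightarrow> real \<Rightarrow> real \<Rightarrow> real" where
  "dd a a' u v = (if u = v then 0 else if (u = 0 \<and> v = 2) \<or> (u = 2 \<and> v = 0) then a else a')"

lemma XX_metric:
  assumes "0 \<le> a" "a \<le> 2 * a'" "0 < a'"
  shows "Metric_space (XX a) (dd a a')"
proof
  fix x y show "0 \<le> dd a a' x y" using assms by (auto simp: dd_def)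
  show "dd a a' x y = dd a a' y x" by (auto simp: dd_def)
next
  fix x y assume "x \<in> XX a" "y \<in> XX a"
  then show "(dd a a' x y = 0) = (x = y)" using assms by (auto simp: dd_def XX_def split: if_splits)
next
  fix x y z assume "x \<in> XX a" "y \<in> XX a" "z \<in> XX a"
  then show "dd a a' x z \<le> dd a a' x y + dd a a' y z" using assms
    by (auto simp: dd_def XX_def split: if_splits)
qed

lemma F2_tri:
  assumes F: "F2 F" and "0 \<le> a" "a \<le> 2 * a'" "0 < a'" "0 \<le> b" "b \<le> 2 * b'" "0 < b'"
  shows "F a b \<le> 2 * F a' b'"
proof -
  have "Metric_space (XX a \<times> XX b) (prod_metric_F F (dd a a') (dd b b'))"
    using F XX_metric[of a a'] XX_metric[of b b'] assms unfolding F2_def by blast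
  then interpret M: Metric_space "XX a \<times> XX b" "prod_metric_F F (dd a a') (dd b b')" .
  define qa where "qa = (if a = 0 then 0 else 2::real)"
  define qb where "qb = (if b = 0 then 0 else 2::real)"
  have "prod_metric_F F (dd a a') (dd b b') (0,0) (qa,qb) \<le>
        prod_metric_F F (dd a a') (dd b b') (0,0) (1,1) + prod_metric_F F (dd a a') (dd b b') (1,1) (qa,qb)"
    by (rule M.triangle) (auto simp: XX_def qa_def qb_def)
  moreover have "dd a a' 0 qa = a" "dd b b' 0 qb = b" "dd a a' 0 1 = a'" "dd b b' 0 1 = b'"
     "dd a a' 1 qa = a'" "dd b b' 1 qb = b'"
    by (auto simp: dd_def qa_def qb_def)
  ultimately show ?thesis by (simp add: prod_metric_F_def)
qed



lemma nbhd_eq: "nbhd S d A r = {x\<in>S. \<exists>a\<in>A. d x a < r}"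
  unfolding nbhd_def by (simp add: INF_less_iff)

lemma open_in_borel: "openin T U \<Longrightarrow> U \<in> sets (borel_of T)"
  unfolding borel_of_def by (rule in_measure_of) (auto dest: openin_subset)

lemma space_borel_of: "space (borel_of T) = topspace T"
  unfolding borel_of_def by (rule space_measure_of) (auto dest: openin_subset)

lemma dense_sep:
  assumes "Metric_space X d" "separable_space (Metric_space.mtopology X d)"
  obtains D where "countable D" "D \<subseteq> X" "\<And>x r. x \<in> X \<Longrightarrow> r > 0 \<Longrightarrow> \<exists>s\<in>D. d x s < r"
proof -
  interpret M: Metric_space X d by fact
  obtain D where D: "countable D" "D \<subseteq> X" "M.mtopology closure_of D = X"
    using assms(2) unfolding separable_space_def by auto
  have "\<exists>s\<in>D. d x s < r" if "x \<in> X" "r > 0" for x r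
    using that D(3) unfolding M.metric_closure_of by auto
  then show ?thesis using that D by blast
qed

lemma box_open_sets:
  assumes MX: "Metric_space X dX" and SX: "separable_space (Metric_space.mtopology X dX)"
    and MY: "Metric_space Y dY" and SY: "separable_space (Metric_space.mtopology Y dY)"
    and G: "G \<subseteq> X \<times> Y"
    and op: "\<And>x y. (x,y) \<in> G \<Longrightarrow> \<exists>r>0. \<forall>x' y'. x' \<in> X \<longrightarrow> y' \<in> Y \<longrightarrow> dX x x' < r \<longrightarrow> dY y y' < r \<longrightarrow> (x',y') \<in> G"
  shows "G \<in> sets (borel_of (Metric_space.mtopology X dX) \<Otimes>\<^sub>M borel_of (Metric_space.mtopology Y dY))"
proof -
  interpret MX: Metric_space X dX by fact
  interpret MY: Metric_space Y dY by fact
  obtain DX where DX: "countable DX" "DX \<subseteq> X" "\<And>x r. x \<in> X \<Longrightarrow> r > 0 \<Longrightarrow> \<exists>s\<in>DX. dX x s < r"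
    using dense_sep[OF MX SX] by blast
  obtain DY where DY: "countable DY" "DY \<subseteq> Y" "\<And>x r. x \<in> Y \<Longrightarrow> r > 0 \<Longrightarrow> \<exists>s\<in>DY. dY x s < r"
    using dense_sep[OF MY SY] by blast
  define I where "I = {(s,t,q). s \<in> DX \<and> t \<in> DY \<and> q \<in> \<rat> \<and> q > 0 \<and> MX.mball s q \<times> MY.mball t q \<subseteq> G}"
  have cI: "countable I"
  proof -
    have "I \<subseteq> DX \<times> DY \<times> \<rat>" unfolding I_def by auto
    moreover have "countable (DX \<times> DY \<times> (\<rat>::real set))"
      using DX(1) DY(1) countable_rat by auto
    ultimately show ?thesis using countable_subset by blast
  qed
  have eq: "G = (\<Union>(s,t,q)\<in>I. MX.mball s q \<times> MY.mball t q)"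
  proof
    show "(\<Union>(s,t,q)\<in>I. MX.mball s q \<times> MY.mball t q) \<subseteq> G" unfolding I_def by auto
  next
    show "G \<subseteq> (\<Union>(s,t,q)\<in>I. MX.mball s q \<times> MY.mball t q)"
    proof
      fix p assume "p \<in> G"
      then obtain x y where p: "p = (x,y)" "(x,y) \<in> G" by (cases p) auto
      with G have xy: "x \<in> X" "y \<in> Y" by auto
      obtain r where r: "r > 0" "\<forall>x' y'. x' \<in> X \<longrightarrow> y' \<in> Y \<longrightarrow> dX x x' < r \<longrightarrow> dY y y' < r \<longrightarrow> (x',y') \<in> G"
        using op[OF p(2)] by blast
      obtain q where q: "q \<in> \<rat>" "0 < q" "q < r/2"
        using r(1) Rats_dense_in_real[of 0 "r/2"] by auto
      obtain s where s: "s \<in> DX" "dX x s < q" using DX(3)[OF xy(1) q(2)] by blast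
      obtain t where t: "t \<in> DY" "dY y t < q" using DY(3)[OF xy(2) q(2)] by blast
      have sub: "MX.mball s q \<times> MY.mball t q \<subseteq> G"
      proof clarify
        fix a b assume ab: "a \<in> MX.mball s q" "b \<in> MY.mball t q"
        have "dX x a \<le> dX x s + dX s a" using MX.triangle xy s DX(2) ab by auto
        moreover have "dY y b \<le> dY y t + dY t b" using MY.triangle xy t DY(2) ab by auto
        ultimately show "(a,b) \<in> G" using r(2) ab s t q by force
      qed
      have "(s,t,q) \<in> I" unfolding I_def using s t q sub by auto
      moreover have "p \<in> MX.mball s q \<times> MY.mball t q"
        using p xy s t DX(2) DY(2) MX.commute MY.commute by auto
      ultimately show "p \<in> (\<Union>(s,t,q)\<in>I. MX.mball s q \<times> MY.mball t q)" by blast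
    qed
  qed
  show ?thesis
    unfolding eq
    by (rule sets.countable_UN''[OF cI]) (auto intro!: pair_measureI open_in_borel)
qed



lemma nbhd_open:
  assumes "Metric_space S d" "A \<subseteq> S"
  shows "openin (Metric_space.mtopology S d) (nbhd S d A r)"
proof -
  interpret M: Metric_space S d by fact
  show ?thesis unfolding M.openin_mtopology nbhd_eq
  proof safe
    fix x a assume x: "x \<in> S" "a \<in> A" "d x a < r"
    show "\<exists>e>0. M.mball x e \<subseteq> {x \<in> S. \<exists>a\<in>A. d x a < r}"
    proof (intro exI conjI)
      show "0 < r - d x a" using x by simp
      show "M.mball x (r - d x a) \<subseteq> {x \<in> S. \<exists>a\<in>A. d x a < r}"
      proof clarsimp
        fix y assume y: "y \<in> S" "d x y < r - d x a"
        have "d y a \<le> d y x + d x a" using M.triangle y x assms(2) by auto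
        then show "\<exists>a\<in>A. d y a < r" using y x M.commute[of x y] by force
      qed
    qed
  qed
qed

lemma prok_cond:
  assumes MS: "Metric_space S d" and pm: "prob_space \<mu>" and pn: "prob_space \<nu>"
    and sm: "sets \<mu> = sets (borel_of (Metric_space.mtopology S d))"
    and sn: "sets \<nu> = sets (borel_of (Metric_space.mtopology S d))"
    and l: "l > 0" and lt: "prokhorov l S d \<mu> \<nu> < e"
    and A: "A \<in> sets (borel_of (Metric_space.mtopology S d))"
  shows "measure \<nu> A - l * e \<le> measure \<mu> (nbhd S d A e)"
proof -
  interpret M: Metric_space S d by fact
  interpret pm: prob_space \<mu> by fact
  interpret pn: prob_space \<nu> by fact
  define P where "P = {\<epsilon>. \<epsilon> > 0 \<and>
        (\<forall>A \<in> sets (borel_of (Metric_space.mtopology S d)).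
           measure \<mu> (nbhd S d A \<epsilon>) \<ge> measure \<nu> A - l * \<epsilon>)}"
  have "1/l \<in> P" unfolding P_def
  proof safe
    fix A have "measure \<nu> A \<le> 1" by (rule pn.prob_le_1)
    moreover have "0 \<le> measure \<mu> (nbhd S d A (1/l))" by simp
    moreover have "l * (1/l) = 1" using l by simp
    ultimately show "measure \<nu> A - l * (1/l) \<le> measure \<mu> (nbhd S d A (1/l))" by linarith
  qed (use l in simp)
  then have ne: "P \<noteq> {}" by blast
  from lt have "Inf P < e" unfolding prokhorov_def P_def .
  then obtain s where s: "s \<in> P" "s < e" using cInf_lessD[OF ne] by blast
  have AS: "A \<subseteq> S" using sets.sets_into_space[OF A] by (simp add: space_borel_of)
  have "nbhd S d A s \<subseteq> nbhd S d A e" using s(2) unfolding nbhd_eq by force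
  moreover have "nbhd S d A e \<in> sets \<mu>" unfolding sm by (rule open_in_borel, rule nbhd_open[OF MS AS])
  ultimately have "measure \<mu> (nbhd S d A s) \<le> measure \<mu> (nbhd S d A e)"
    by (rule pm.finite_measure_mono)
  moreover have "measure \<nu> A - l * s \<le> measure \<mu> (nbhd S d A s)" using s(1) A unfolding P_def by auto
  moreover have "l * s \<le> l * e" using l s(2) by simp
  ultimately show ?thesis by linarith
qed

lemma prok_nonneg:
  assumes l: "l > 0" and pn: "prob_space \<nu>"
  shows "0 \<le> prokhorov l S d \<mu> \<nu>"
proof -
  interpret pn: prob_space \<nu> by fact
  define P where "P = {\<epsilon>. \<epsilon> > 0 \<and>
        (\<forall>A \<in> sets (borel_of (Metric_space.mtopology S d)).
           measure \<mu> (nbhd S d A \<epsilon>) \<ge> measure \<nu> A - l * \<epsilon>)}"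
  have "1/l \<in> P" unfolding P_def
  proof safe
    fix A have "measure \<nu> A \<le> 1" by (rule pn.prob_le_1)
    moreover have "0 \<le> measure \<mu> (nbhd S d A (1/l))" by simp
    moreover have "l * (1/l) = 1" using l by simp
    ultimately show "measure \<nu> A - l * (1/l) \<le> measure \<mu> (nbhd S d A (1/l))" by linarith
  qed (use l in simp)
  then have "P \<noteq> {}" by blast
  then have "0 \<le> Inf P" by (rule cInf_greatest) (auto simp: P_def)
  then show ?thesis unfolding prokhorov_def P_def .
qed

lemma prok_le:
  assumes l: "l > 0" and c: "c > 0"
    and H: "\<And>A. A \<in> sets (borel_of (Metric_space.mtopology S d)) \<Longrightarrow> measure \<nu> A - l * c \<le> measure \<mu> (nbhd S d A c)"
  shows "prokhorov l S d \<mu> \<nu> \<le> c"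
  unfolding prokhorov_def
  by (rule cInf_lower) (use H c in \<open>auto intro!: bdd_belowI[where m=0]\<close>)



lemma F_cont_pt:
  assumes F: "F2 F" and a0: "0 \<le> a0" and b0: "0 \<le> b0" and lt: "F a0 b0 < c"
  shows "\<exists>r>0. \<forall>a b. 0 \<le> a \<longrightarrow> 0 \<le> b \<longrightarrow> \<bar>a - a0\<bar> < r \<longrightarrow> \<bar>b - b0\<bar> < r \<longrightarrow> F a b < c"
proof -
  have co: "continuous_on ({0..} \<times> {0..}) (\<lambda>(a, b). F a b)" using F unfolding F2_def by blast
  have "(a0,b0) \<in> {0..} \<times> {0..}" using a0 b0 by auto
  with co obtain dd where dd: "dd > 0" and H: "\<forall>x'\<in>{0..} \<times> {0..}. dist x' (a0,b0) < dd \<longrightarrow>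
        dist ((\<lambda>(a, b). F a b) x') ((\<lambda>(a, b). F a b) (a0,b0)) < c - F a0 b0"
    unfolding continuous_on_iff using lt by (metis diff_gt_0_iff_gt)
  show ?thesis
  proof (intro exI[of _ "dd/2"] conjI allI impI)
    show "0 < dd/2" using dd by simp
    fix a b :: real assume ab: "0 \<le> a" "0 \<le> b" "\<bar>a - a0\<bar> < dd/2" "\<bar>b - b0\<bar> < dd/2"
    have "dist (a,b) (a0,b0) \<le> \<bar>a - a0\<bar> + \<bar>b - b0\<bar>"
      unfolding dist_Pair_Pair dist_real_def using sqrt_sum_squares_le_sum_abs[of "a - a0" "b - b0"] by simp
    then have "dist (a,b) (a0,b0) < dd" using ab by linarith
    then have "dist (F a b) (F a0 b0) < c - F a0 b0" using H ab by auto
    then show "F a b < c" unfolding dist_real_def by linarith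
  qed
qed



lemma core:
  fixes X :: "'a set" and dX :: "'a \<Rightarrow> 'a \<Rightarrow> real"
    and Y :: "'b set" and dY :: "'b \<Rightarrow> 'b \<Rightarrow> real"
    and F :: "real \<Rightarrow> real \<Rightarrow> real"
    and \<mu> \<mu>' :: "'a measure" and \<nu> \<nu>' :: "'b measure" and l :: real
  assumes MX: "Metric_space X dX" and SX: "separable_space (Metric_space.mtopology X dX)"
    and MY: "Metric_space Y dY" and SY: "separable_space (Metric_space.mtopology Y dY)"
    and F: "F2 F"
    and pm: "prob_space \<mu>" and sm: "sets \<mu> = sets (borel_of (Metric_space.mtopology X dX))"
    and pm': "prob_space \<mu>'" and sm': "sets \<mu>' = sets (borel_of (Metric_space.mtopology X dX))"
    and pn: "prob_space \<nu>" and sn: "sets \<nu> = sets (borel_of (Metric_space.mtopology Y dY))"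
    and pn': "prob_space \<nu>'" and sn': "sets \<nu>' = sets (borel_of (Metric_space.mtopology Y dY))"
    and l: "l > 0" and e: "e > 0" and dl: "dl > 0" and g: "g > 0"
    and HX: "\<And>A. A \<in> sets (borel_of (Metric_space.mtopology X dX)) \<Longrightarrow> measure \<mu>' A - l * e \<le> measure \<mu> (nbhd X dX A e)"
    and HY: "\<And>A. A \<in> sets (borel_of (Metric_space.mtopology Y dY)) \<Longrightarrow> measure \<nu>' A - l * dl \<le> measure \<nu> (nbhd Y dY A dl)"
    and Fb: "\<And>a b. 0 \<le> a \<Longrightarrow> a < e + g \<Longrightarrow> 0 \<le> b \<Longrightarrow> b < dl + g \<Longrightarrow> F a b < c"
    and ec: "e + dl \<le> c"
    and C: "C \<in> sets (\<mu>' \<Otimes>\<^sub>M \<nu>')"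
  shows "measure (\<mu>' \<Otimes>\<^sub>M \<nu>') C - l * c \<le> measure (\<mu> \<Otimes>\<^sub>M \<nu>) (nbhd (X \<times> Y) (prod_metric_F F dX dY) C c)"
proof -
  interpret MX: Metric_space X dX by fact
  interpret MY: Metric_space Y dY by fact
  interpret pm: prob_space \<mu> by fact
  interpret pm': prob_space \<mu>' by fact
  interpret pn: prob_space \<nu> by fact
  interpret pn': prob_space \<nu>' by fact
  define BX where "BX = borel_of MX.mtopology"
  define BY where "BY = borel_of MY.mtopology"
  define SS where "SS = sets (BX \<Otimes>\<^sub>M BY)"
  have spX: "space BX = X" unfolding BX_def by (simp add: space_borel_of)
  have spY: "space BY = Y" unfolding BY_def by (simp add: space_borel_of)
  have s1: "sets (\<mu>' \<Otimes>\<^sub>M \<nu>') = SS" unfolding SS_def BX_def BY_def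
    by (rule sets_pair_measure_cong[OF sm' sn'])
  have s2: "sets (\<mu> \<Otimes>\<^sub>M \<nu>) = SS" unfolding SS_def BX_def BY_def
    by (rule sets_pair_measure_cong[OF sm sn])
  have s3: "sets (\<mu>' \<Otimes>\<^sub>M \<nu>) = SS" unfolding SS_def BX_def BY_def
    by (rule sets_pair_measure_cong[OF sm' sn])
  have spm: "space \<mu> = X" "space \<mu>' = X" using sets_eq_imp_space_eq[OF sm] sets_eq_imp_space_eq[OF sm']
    by (simp_all add: space_borel_of)
  have spn: "space \<nu> = Y" "space \<nu>' = Y" using sets_eq_imp_space_eq[OF sn] sets_eq_imp_space_eq[OF sn']
    by (simp_all add: space_borel_of)
  have bopen: "G \<in> SS" if "G \<subseteq> X \<times> Y" "\<And>x y. (x,y) \<in> G \<Longrightarrow> \<exists>r>0. \<forall>x' y'. x' \<in> X \<longrightarrow> y' \<in> Y \<longrightarrow> dX x x' < r \<longrightarrow> dY y y' < r \<longrightarrow> (x',y') \<in> G" for G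
    unfolding SS_def BX_def BY_def by (rule box_open_sets[OF MX SX MY SY that])
  have CXY: "C \<subseteq> X \<times> Y" using sets.sets_into_space[OF C] by (simp add: space_pair_measure spm spn)
  define Ob where "Ob = {(x,y). x \<in> X \<and> y \<in> Y \<and> (\<exists>(x0,y0)\<in>C. dX x x0 < g \<and> dY y y0 < g)}"
  define D where "D = {(x,y). x \<in> X \<and> y \<in> nbhd Y dY (Pair x -` Ob) dl}"
  define E where "E = {(x,y). y \<in> Y \<and> x \<in> nbhd X dX ((\<lambda>x. (x,y)) -` D) e}"
  define N where "N = nbhd (X \<times> Y) (prod_metric_F F dX dY) C c"
  have CO: "C \<subseteq> Ob"
  proof clarify
    fix x y assume "(x,y) \<in> C"
    moreover then have "x \<in> X" "y \<in> Y" using CXY by auto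
    ultimately show "(x,y) \<in> Ob" unfolding Ob_def using g by force
  qed
  have OXY: "Ob \<subseteq> X \<times> Y" unfolding Ob_def by auto
  have DXY: "D \<subseteq> X \<times> Y" unfolding D_def nbhd_eq by auto
  have EXY: "E \<subseteq> X \<times> Y" unfolding E_def nbhd_eq by auto
  have NXY: "N \<subseteq> X \<times> Y" unfolding N_def nbhd_eq by auto
  have oO: "\<exists>r>0. \<forall>x' y'. x' \<in> X \<longrightarrow> y' \<in> Y \<longrightarrow> dX x x' < r \<longrightarrow> dY y y' < r \<longrightarrow> (x',y') \<in> Ob"
    if "(x,y) \<in> Ob" for x y
  proof -
    from that obtain x0 y0 where xy: "x \<in> X" "y \<in> Y" "(x0,y0) \<in> C" "dX x x0 < g" "dY y y0 < g"
      unfolding Ob_def by auto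
    have x0: "x0 \<in> X" "y0 \<in> Y" using xy(3) CXY by auto
    show ?thesis
    proof (intro exI[of _ "min (g - dX x x0) (g - dY y y0)"] conjI allI impI)
      show "0 < min (g - dX x x0) (g - dY y y0)" using xy by simp
      fix x' y' assume h: "x' \<in> X" "y' \<in> Y" "dX x x' < min (g - dX x x0) (g - dY y y0)"
        "dY y y' < min (g - dX x x0) (g - dY y y0)"
      have "dX x' x0 \<le> dX x' x + dX x x0" using MX.triangle h xy x0 by auto
      moreover have "dY y' y0 \<le> dY y' y + dY y y0" using MY.triangle h xy x0 by auto
      ultimately show "(x',y') \<in> Ob" unfolding Ob_def using h xy MX.commute[of x x'] MY.commute[of y y'] by force
    qed
  qed
  have oD: "\<exists>r>0. \<forall>x' y'. x' \<in> X \<longrightarrow> y' \<in> Y \<longrightarrow> dX x x' < r \<longrightarrow> dY y y' < r \<longrightarrow> (x',y') \<in> D"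
    if "(x,y) \<in> D" for x y
  proof -
    from that obtain y1 where xy: "x \<in> X" "y \<in> Y" "(x,y1) \<in> Ob" "dY y y1 < dl"
      unfolding D_def nbhd_eq by auto
    have y1: "y1 \<in> Y" using xy(3) OXY by auto
    obtain r1 where r1: "r1 > 0" "\<forall>x' y'. x' \<in> X \<longrightarrow> y' \<in> Y \<longrightarrow> dX x x' < r1 \<longrightarrow> dY y1 y' < r1 \<longrightarrow> (x',y') \<in> Ob"
      using oO[OF xy(3)] by blast
    show ?thesis
    proof (intro exI[of _ "min r1 (dl - dY y y1)"] conjI allI impI)
      show "0 < min r1 (dl - dY y y1)" using xy r1 by simp
      fix x' y' assume h: "x' \<in> X" "y' \<in> Y" "dX x x' < min r1 (dl - dY y y1)" "dY y y' < min r1 (dl - dY y y1)"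
      have "dY y1 y1 = 0" using y1 by simp
      then have "(x', y1) \<in> Ob" using r1 h y1 by auto
      moreover have "dY y' y1 \<le> dY y' y + dY y y1" using MY.triangle h xy y1 by auto
      ultimately show "(x',y') \<in> D" unfolding D_def nbhd_eq using h MY.commute[of y y'] by force
    qed
  qed
  have oE: "\<exists>r>0. \<forall>x' y'. x' \<in> X \<longrightarrow> y' \<in> Y \<longrightarrow> dX x x' < r \<longrightarrow> dY y y' < r \<longrightarrow> (x',y') \<in> E"
    if "(x,y) \<in> E" for x y
  proof -
    from that obtain x1 where xy: "x \<in> X" "y \<in> Y" "(x1,y) \<in> D" "dX x x1 < e"
      unfolding E_def nbhd_eq by auto
    have x1: "x1 \<in> X" using xy(3) DXY by auto
    obtain r1 where r1: "r1 > 0" "\<forall>x' y'. x' \<in> X \<longrightarrow> y' \<in> Y \<longrightarrow> dX x1 x' < r1 \<longrightarrow> dY y y' < r1 \<longrightarrow> (x',y') \<in> D"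
      using oD[OF xy(3)] by blast
    show ?thesis
    proof (intro exI[of _ "min r1 (e - dX x x1)"] conjI allI impI)
      show "0 < min r1 (e - dX x x1)" using xy r1 by simp
      fix x' y' assume h: "x' \<in> X" "y' \<in> Y" "dX x x' < min r1 (e - dX x x1)" "dY y y' < min r1 (e - dX x x1)"
      have "dX x1 x1 = 0" using x1 by simp
      then have "(x1, y') \<in> D" using r1 h x1 by auto
      moreover have "dX x' x1 \<le> dX x' x + dX x x1" using MX.triangle h xy x1 by auto
      ultimately show "(x',y') \<in> E" unfolding E_def nbhd_eq using h MX.commute[of x x'] by force
    qed
  qed
  have oN: "\<exists>r>0. \<forall>x' y'. x' \<in> X \<longrightarrow> y' \<in> Y \<longrightarrow> dX x x' < r \<longrightarrow> dY y y' < r \<longrightarrow> (x',y') \<in> N"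
    if "(x,y) \<in> N" for x y
  proof -
    from that obtain x0 y0 where xy: "x \<in> X" "y \<in> Y" "(x0,y0) \<in> C" "F (dX x x0) (dY y y0) < c"
      unfolding N_def nbhd_eq prod_metric_F_def by auto
    have x0: "x0 \<in> X" "y0 \<in> Y" using xy(3) CXY by auto
    obtain r where r: "r > 0" "\<forall>a b. 0 \<le> a \<longrightarrow> 0 \<le> b \<longrightarrow> \<bar>a - dX x x0\<bar> < r \<longrightarrow> \<bar>b - dY y y0\<bar> < r \<longrightarrow> F a b < c"
      using F_cont_pt[OF F MX.nonneg MY.nonneg xy(4)] by blast
    show ?thesis
    proof (intro exI[of _ r] conjI allI impI)
      show "0 < r" by fact
      fix x' y' assume h: "x' \<in> X" "y' \<in> Y" "dX x x' < r" "dY y y' < r"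
      have "dX x' x0 \<le> dX x' x + dX x x0" "dX x x0 \<le> dX x x' + dX x' x0" using MX.triangle h xy x0 by auto
      then have "\<bar>dX x' x0 - dX x x0\<bar> < r" using h MX.commute[of x x'] by auto
      moreover have "dY y' y0 \<le> dY y' y + dY y y0" "dY y y0 \<le> dY y y' + dY y' y0" using MY.triangle h xy x0 by auto
      then have "\<bar>dY y' y0 - dY y y0\<bar> < r" using h MY.commute[of y y'] by auto
      ultimately have "F (dX x' x0) (dY y' y0) < c" using r(2) by auto
      then show "(x',y') \<in> N" unfolding N_def nbhd_eq prod_metric_F_def using h xy(3) by force
    qed
  qed
  have O: "Ob \<in> SS" by (rule bopen[OF OXY oO])
  have Dm: "D \<in> SS" by (rule bopen[OF DXY oD])
  have Em: "E \<in> SS" by (rule bopen[OF EXY oE])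
  have Nm: "N \<in> SS" by (rule bopen[OF NXY oN])
  have EN: "E \<subseteq> N"
  proof clarify
    fix x y assume "(x,y) \<in> E"
    then obtain x1 y1 x0 y0 where h: "x \<in> X" "y \<in> Y" "x1 \<in> X" "dX x x1 < e" "y1 \<in> Y" "dY y y1 < dl"
      "(x0,y0) \<in> C" "dX x1 x0 < g" "dY y1 y0 < g"
      unfolding E_def D_def Ob_def nbhd_eq by auto
    have x0: "x0 \<in> X" "y0 \<in> Y" using h(7) CXY by auto
    have "dX x x0 \<le> dX x x1 + dX x1 x0" using MX.triangle h x0 by auto
    moreover have "dY y y0 \<le> dY y y1 + dY y1 y0" using MY.triangle h x0 by auto
    ultimately have "F (dX x x0) (dY y y0) < c" using h by (intro Fb) auto
    then show "(x,y) \<in> N" unfolding N_def nbhd_eq prod_metric_F_def using h by force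
  qed
  interpret p1: pair_sigma_finite \<mu>' \<nu>
    by (simp add: pair_sigma_finite_def prob_space_imp_sigma_finite pm' pn)
  interpret p2: pair_sigma_finite \<mu> \<nu>
    by (simp add: pair_sigma_finite_def prob_space_imp_sigma_finite pm pn)
  have le_e: "ennreal a \<le> ennreal b + ennreal k" if "a - k \<le> b" "0 \<le> b" "0 \<le> k" for a b k :: real
  proof -
    have "ennreal a \<le> ennreal (b + k)" using that by (intro ennreal_leI) linarith
    then show ?thesis using that by simp
  qed
  have pt1: "emeasure \<nu>' (Pair x -` Ob) \<le> emeasure \<nu> (Pair x -` D) + ennreal (l*dl)" if x: "x \<in> space \<mu>'" for x
  proof -
    have B: "Pair x -` Ob \<in> sets BY" using sets_Pair1[of Ob BX BY] O unfolding SS_def by simp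
    have eq: "Pair x -` D = nbhd Y dY (Pair x -` Ob) dl" using x spm by (auto simp: D_def)
    have "measure \<nu>' (Pair x -` Ob) - l * dl \<le> measure \<nu> (Pair x -` D)"
      using HY[of "Pair x -` Ob"] B eq unfolding BY_def by simp
    then show ?thesis using l dl
      by (simp add: pn'.emeasure_eq_measure pn.emeasure_eq_measure le_e)
  qed
  have pt2: "emeasure \<mu>' ((\<lambda>x. (x,y)) -` D) \<le> emeasure \<mu> ((\<lambda>x. (x,y)) -` E) + ennreal (l*e)" if y: "y \<in> space \<nu>" for y
  proof -
    have B: "(\<lambda>x. (x,y)) -` D \<in> sets BX" using sets_Pair2[of D BX BY] Dm unfolding SS_def by simp
    have eq: "(\<lambda>x. (x,y)) -` E = nbhd X dX ((\<lambda>x. (x,y)) -` D) e" using y spn by (auto simp: E_def)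
    have "measure \<mu>' ((\<lambda>x. (x,y)) -` D) - l * e \<le> measure \<mu> ((\<lambda>x. (x,y)) -` E)"
      using HX[of "(\<lambda>x. (x,y)) -` D"] B eq unfolding BX_def by simp
    then show ?thesis using l e
      by (simp add: pm'.emeasure_eq_measure pm.emeasure_eq_measure le_e)
  qed
  have "emeasure (\<mu>' \<Otimes>\<^sub>M \<nu>') C \<le> emeasure (\<mu>' \<Otimes>\<^sub>M \<nu>') Ob"
    by (rule emeasure_mono[OF CO]) (simp add: s1 O)
  also have "\<dots> = (\<integral>\<^sup>+x. emeasure \<nu>' (Pair x -` Ob) \<partial>\<mu>')"
    by (rule pn'.emeasure_pair_measure_alt) (simp add: s1 O)
  also have "\<dots> \<le> (\<integral>\<^sup>+x. (emeasure \<nu> (Pair x -` D) + ennreal (l*dl)) \<partial>\<mu>')"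
    by (rule nn_integral_mono) (rule pt1)
  also have "\<dots> = (\<integral>\<^sup>+x. emeasure \<nu> (Pair x -` D) \<partial>\<mu>') + ennreal (l*dl)"
    by (subst nn_integral_add) (auto intro!: p1.measurable_emeasure_Pair1 simp: s3 Dm pm'.emeasure_space_1)
  also have "(\<integral>\<^sup>+x. emeasure \<nu> (Pair x -` D) \<partial>\<mu>') = emeasure (\<mu>' \<Otimes>\<^sub>M \<nu>) D"
    by (rule pn.emeasure_pair_measure_alt[symmetric]) (simp add: s3 Dm)
  also have "emeasure (\<mu>' \<Otimes>\<^sub>M \<nu>) D = (\<integral>\<^sup>+y. emeasure \<mu>' ((\<lambda>x. (x,y)) -` D) \<partial>\<nu>)"
    by (rule p1.emeasure_pair_measure_alt2) (simp add: s3 Dm)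
  also have "(\<integral>\<^sup>+y. emeasure \<mu>' ((\<lambda>x. (x,y)) -` D) \<partial>\<nu>) \<le> (\<integral>\<^sup>+y. (emeasure \<mu> ((\<lambda>x. (x,y)) -` E) + ennreal (l*e)) \<partial>\<nu>)"
    by (rule nn_integral_mono) (rule pt2)
  also have "\<dots> = (\<integral>\<^sup>+y. emeasure \<mu> ((\<lambda>x. (x,y)) -` E) \<partial>\<nu>) + ennreal (l*e)"
    by (subst nn_integral_add) (auto intro!: p2.measurable_emeasure_Pair2 simp: s2 Em pn.emeasure_space_1)
  also have "(\<integral>\<^sup>+y. emeasure \<mu> ((\<lambda>x. (x,y)) -` E) \<partial>\<nu>) = emeasure (\<mu> \<Otimes>\<^sub>M \<nu>) E"
    by (rule p2.emeasure_pair_measure_alt2[symmetric]) (simp add: s2 Em)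
  also have "emeasure (\<mu> \<Otimes>\<^sub>M \<nu>) E \<le> emeasure (\<mu> \<Otimes>\<^sub>M \<nu>) N"
    by (rule emeasure_mono[OF EN]) (simp add: s2 Nm)
  finally have ch: "emeasure (\<mu>' \<Otimes>\<^sub>M \<nu>') C \<le> emeasure (\<mu> \<Otimes>\<^sub>M \<nu>) N + ennreal (l*e) + ennreal (l*dl)"
    by (simp add: add_right_mono)
  have "ennreal (l*e) + ennreal (l*dl) \<le> ennreal (l*c)"
  proof -
    have "ennreal (l*e) + ennreal (l*dl) = ennreal (l*e + l*dl)" using l e dl by simp
    also have "\<dots> \<le> ennreal (l*c)" using l ec
      by (intro ennreal_leI) (metis distrib_left mult_le_cancel_left_pos)
    finally show ?thesis .
  qed
  with ch have ch2: "emeasure (\<mu>' \<Otimes>\<^sub>M \<nu>') C \<le> emeasure (\<mu> \<Otimes>\<^sub>M \<nu>) N + ennreal (l*c)"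
    by (metis add.assoc add_left_mono order_trans)
  interpret q1: prob_space "\<mu>' \<Otimes>\<^sub>M \<nu>'" by (rule prob_space_pair[OF pm' pn'])
  interpret q2: prob_space "\<mu> \<Otimes>\<^sub>M \<nu>" by (rule prob_space_pair[OF pm pn])
  have "0 \<le> l * c" using l ec e dl by simp
  with ch2 have "measure (\<mu>' \<Otimes>\<^sub>M \<nu>') C \<le> measure (\<mu> \<Otimes>\<^sub>M \<nu>) N + l * c"
    by (simp add: q1.emeasure_eq_measure q2.emeasure_eq_measure flip: ennreal_plus)
  then show ?thesis unfolding N_def by linarith
qed



theorem mainTheorem15:
  fixes X :: "'a set" and dX :: "'a \<Rightarrow> 'a \<Rightarrow> real"
    and Y :: "'b set" and dY :: "'b \<Rightarrow> 'b \<Rightarrow> real"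
    and F :: "real \<Rightarrow> real \<Rightarrow> real"
    and \<mu> \<mu>' :: "'a measure" and \<nu> \<nu>' :: "'b measure" and l :: real
  assumes "Metric_space X dX" and "separable_space (Metric_space.mtopology X dX)"
    and "Metric_space Y dY" and "separable_space (Metric_space.mtopology Y dY)"
    and "F2 F"
    and "prob_space \<mu>" and "sets \<mu> = sets (borel_of (Metric_space.mtopology X dX))"
    and "prob_space \<mu>'" and "sets \<mu>' = sets (borel_of (Metric_space.mtopology X dX))"
    and "prob_space \<nu>" and "sets \<nu> = sets (borel_of (Metric_space.mtopology Y dY))"
    and "prob_space \<nu>'" and "sets \<nu>' = sets (borel_of (Metric_space.mtopology Y dY))"
    and "l > 0"
  shows "prokhorov l (X \<times> Y) (prod_metric_F F dX dY) (\<mu> \<Otimes>\<^sub>M \<nu>) (\<mu>' \<Otimes>\<^sub>M \<nu>')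
         \<le> max (prokhorov l X dX \<mu> \<mu>' + prokhorov l Y dY \<nu> \<nu>')
                (2 * F (prokhorov l X dX \<mu> \<mu>') (prokhorov l Y dY \<nu> \<nu>'))"
proof -
  note A = assms
  define a where "a = prokhorov l X dX \<mu> \<mu>'"
  define b where "b = prokhorov l Y dY \<nu> \<nu>'"
  define M where "M = max (a + b) (2 * F a b)"
  have a0: "0 \<le> a" unfolding a_def by (rule prok_nonneg[OF A(14) A(8)])
  have b0: "0 \<le> b" unfolding b_def by (rule prok_nonneg[OF A(14) A(12)])
  have "prokhorov l (X \<times> Y) (prod_metric_F F dX dY) (\<mu> \<Otimes>\<^sub>M \<nu>) (\<mu>' \<Otimes>\<^sub>M \<nu>') \<le> M"
  proof (rule field_le_epsilon)
    fix \<eta> :: real assume eta: "0 < \<eta>"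
    obtain \<rho> where rho: "\<rho> > 0" "\<forall>u v. 0 \<le> u \<longrightarrow> 0 \<le> v \<longrightarrow> \<bar>u - a\<bar> < \<rho> \<longrightarrow> \<bar>v - b\<bar> < \<rho> \<longrightarrow> F u v < F a b + \<eta>/2"
      using F_cont_pt[OF A(5) a0 b0, of "F a b + \<eta>/2"] eta by auto
    define t where "t = min \<rho> \<eta> / 4"
    have t: "t > 0" "2 * t < \<rho>" "2 * t \<le> \<eta>/2" using rho eta unfolding t_def by auto
    define c where "c = M + \<eta>"
    have Fab: "F (a + 2*t) (b + 2*t) < F a b + \<eta>/2" using rho(2) a0 b0 t by auto
    show "prokhorov l (X \<times> Y) (prod_metric_F F dX dY) (\<mu> \<Otimes>\<^sub>M \<nu>) (\<mu>' \<Otimes>\<^sub>M \<nu>') \<le> M + \<eta>"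
      unfolding c_def[symmetric]
    proof (rule prok_le[OF A(14)])
      show "0 < c" unfolding c_def M_def using a0 b0 eta by auto
    next
      fix C assume "C \<in> sets (borel_of (Metric_space.mtopology (X \<times> Y) (prod_metric_F F dX dY)))"
      show "measure (\<mu>' \<Otimes>\<^sub>M \<nu>') C - l * c \<le> measure (\<mu> \<Otimes>\<^sub>M \<nu>) (nbhd (X \<times> Y) (prod_metric_F F dX dY) C c)"
      proof (cases "C \<in> sets (\<mu>' \<Otimes>\<^sub>M \<nu>')")
        case True
        show ?thesis
        proof (rule core[OF A(1-13) A(14), of "a + t" "b + t" t])
          show "0 < a + t" "0 < b + t" "0 < t" using a0 b0 t by auto
        next
          fix B assume "B \<in> sets (borel_of (Metric_space.mtopology X dX))"
          then show "measure \<mu>' B - l * (a + t) \<le> measure \<mu> (nbhd X dX B (a + t))"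
            using prok_cond[OF A(1) A(6) A(8) A(7) A(9) A(14)] t unfolding a_def by simp
        next
          fix B assume "B \<in> sets (borel_of (Metric_space.mtopology Y dY))"
          then show "measure \<nu>' B - l * (b + t) \<le> measure \<nu> (nbhd Y dY B (b + t))"
            using prok_cond[OF A(3) A(10) A(12) A(11) A(13) A(14)] t unfolding b_def by simp
        next
          fix u v assume uv: "0 \<le> u" "u < a + t + t" "0 \<le> v" "v < b + t + t"
          have "F u v \<le> 2 * F (a + 2*t) (b + 2*t)"
            by (rule F2_tri[OF A(5)]) (use uv a0 b0 t in auto)
          also have "\<dots> < 2 * F a b + \<eta>" using Fab by simp
          also have "\<dots> \<le> c" unfolding c_def M_def by simp
          finally show "F u v < c" .
        next
          show "a + t + (b + t) \<le> c" unfolding c_def M_def using t by auto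
        qed fact
      next
        case False
        then have "measure (\<mu>' \<Otimes>\<^sub>M \<nu>') C = 0" by (simp add: measure_notin_sets)
        moreover have "0 < l * c" using A(14) a0 b0 eta unfolding c_def M_def by auto
        moreover have "0 \<le> measure (\<mu> \<Otimes>\<^sub>M \<nu>) (nbhd (X \<times> Y) (prod_metric_F F dX dY) C c)"
          by (rule measure_nonneg)
        ultimately show ?thesis by linarith
      qed
    qed
  qed
  then show ?thesis unfolding M_def a_def b_def .
qed


end
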